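(* Let $X,Y$ be normed spaces over $K$ and $M>0$. The set $B^M(X,Y)$ of all topology bounded $M$-contraction operators from $X$ into $Y$ is a subset of $B(X,Y)$ and is closed in the normed space $(B(X,Y),\|\cdot\|_{B(X,Y)})$.
   Context: $K$ is $\mathbb{R}$ or $\mathbb{C}$; normed spaces are nontrivial; operators are arbitrary maps. $\|F\|_{B(X,Y)}=\max\left(\sup_{x\neq 0,x\in X}\frac{\|F(x)\|_Y}{\|x\|_X},\ \|F(0)\|_Y\right)$ and $B(X,Y)$ is the set of maps $F:X\to Y$ for which this is finite; it is a normed space under pointwise operations with norm $\|\cdot\|_{B(X,Y)}$. A map $F$ is topology bounded if it maps bounded sets of $X$ to bounded sets of $Y$. $F$ is an $M$-contraction operator if $\|F(kx)\|_Y\le M|k|\,\|F(x)\|_Y$ for every scalar $k\neq0$ and every $x\neq 0$. *)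

theory Defs
  imports "HOL-Analysis.Analysis"
begin

definition Bset :: "('a::real_normed_vector \<Rightarrow> 'b::real_normed_vector) set" where
  "Bset = {F. bdd_above ((\<lambda>x. norm (F x) / norm x) ` (- {0}))}"

definition bnorm :: "('a::real_normed_vector \<Rightarrow> 'b::real_normed_vector) \<Rightarrow> real" where
  "bnorm F = max (Sup ((\<lambda>x. norm (F x) / norm x) ` (- {0}))) (norm (F 0))"

definition topo_bounded :: "('a::real_normed_vector \<Rightarrow> 'b::real_normed_vector) \<Rightarrow> bool" where
  "topo_bounded F \<longleftrightarrow> (\<forall>S. bounded S \<longrightarrow> bounded (F ` S))"

definition contraction_R :: "real \<Rightarrow> ('a::real_normed_vector \<Rightarrow> 'b::real_normed_vector) \<Rightarrow> bool" where
  "contraction_R M F \<longleftrightarrow>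
     (\<forall>k::real. \<forall>x. k \<noteq> 0 \<longrightarrow> x \<noteq> 0 \<longrightarrow> norm (F (k *\<^sub>R x)) \<le> M * \<bar>k\<bar> * norm (F x))"

text \<open>A complex normed space structure on a real normed vector space:
  a complex scalar multiplication sc extending scaleR, satisfying the module laws
  and absolute homogeneity of the norm.\<close>
definition complex_normed_scaling :: "(complex \<Rightarrow> 'a::real_normed_vector \<Rightarrow> 'a) \<Rightarrow> bool" where
  "complex_normed_scaling sc \<longleftrightarrow>
     (\<forall>a b x. sc a (sc b x) = sc (a * b) x) \<and>
     (\<forall>x. sc 1 x = x) \<and>
     (\<forall>a x y. sc a (x + y) = sc a x + sc a y) \<and>
     (\<forall>a b x. sc (a + b) x = sc a x + sc b x) \<and>
     (\<forall>r x. sc (complex_of_real r) x = r *\<^sub>R x) \<and>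
     (\<forall>a x. norm (sc a x) = cmod a * norm x)"

definition contraction_C :: "(complex \<Rightarrow> 'a::real_normed_vector \<Rightarrow> 'a) \<Rightarrow> real \<Rightarrow> ('a \<Rightarrow> 'b::real_normed_vector) \<Rightarrow> bool" where
  "contraction_C sc M F \<longleftrightarrow>
     (\<forall>k::complex. \<forall>x. k \<noteq> 0 \<longrightarrow> x \<noteq> 0 \<longrightarrow> norm (F (sc k x)) \<le> M * cmod k * norm (F x))"

definition BM_R :: "real \<Rightarrow> ('a::real_normed_vector \<Rightarrow> 'b::real_normed_vector) set" where
  "BM_R M = {F. topo_bounded F \<and> contraction_R M F}"

definition BM_C :: "(complex \<Rightarrow> 'a::real_normed_vector \<Rightarrow> 'a) \<Rightarrow> real \<Rightarrow> ('a \<Rightarrow> 'b::real_normed_vector) set" where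
  "BM_C sc M = {F. topo_bounded F \<and> contraction_C sc M F}"

definition Btop :: "('a::real_normed_vector \<Rightarrow> 'b::real_normed_vector) topology" where
  "Btop = Metric_space.mtopology Bset (\<lambda>F G. bnorm (F - G))"

end

theory Submission
  imports Defs "HOL-Library.Function_Algebras"
begin

lemma bnorm_nonneg: "0 \<le> bnorm F"
  unfolding bnorm_def by (simp add: le_max_iff_disj)

lemma bnorm_0: "norm (F 0) \<le> bnorm F"
  unfolding bnorm_def by simp

lemma Bset_bound:
  assumes "F \<in> Bset" "x \<noteq> 0"
  shows "norm (F x) \<le> bnorm F * norm x"
proof -
  have "norm (F x) / norm x \<le> Sup ((\<lambda>x. norm (F x) / norm x) ` (- {0}))"
    using assms by (intro cSup_upper) (auto simp: Bset_def)
  also have "\<dots> \<le> bnorm F" unfolding bnorm_def by simp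
  finally show ?thesis using assms(2) by (simp add: divide_le_eq)
qed

lemma Bset_add:
  assumes "F \<in> Bset" "G \<in> Bset"
  shows "F + G \<in> Bset"
proof -
  have "norm ((F + G) x) / norm x \<le> bnorm F + bnorm G" if "x \<noteq> 0" for x
  proof -
    have "norm ((F + G) x) \<le> norm (F x) + norm (G x)" by (simp add: norm_triangle_ineq)
    also have "\<dots> \<le> (bnorm F + bnorm G) * norm x"
      using Bset_bound[OF assms(1) that] Bset_bound[OF assms(2) that] by (simp add: algebra_simps)
    finally show ?thesis using that by (simp add: divide_le_eq)
  qed
  then show ?thesis unfolding Bset_def by (auto intro!: bdd_aboveI2)
qed

lemma Bset_uminus:
  assumes "F \<in> Bset"
  shows "- F \<in> Bset"
  using assms unfolding Bset_def by simp

lemma Bset_diff: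
  assumes "F \<in> Bset" "G \<in> Bset"
  shows "F - G \<in> Bset"
  using Bset_add[OF assms(1) Bset_uminus[OF assms(2)]] by simp

lemma bnorm_add:
  assumes "F \<in> Bset" "G \<in> Bset" "\<exists>x::'a::real_normed_vector. x \<noteq> 0"
  shows "bnorm (F + G :: 'a \<Rightarrow> 'b::real_normed_vector) \<le> bnorm F + bnorm G"
proof -
  have "Sup ((\<lambda>x. norm ((F + G) x) / norm x) ` (- {0})) \<le> bnorm F + bnorm G"
  proof (rule cSup_least)
    show "(\<lambda>x. norm ((F + G) x) / norm x) ` (- {0}) \<noteq> {}" using assms(3) by auto
  next
    fix y assume "y \<in> (\<lambda>x. norm ((F + G) x) / norm x) ` (- {0})"
    then obtain x where x: "x \<noteq> 0" "y = norm ((F + G) x) / norm x" by auto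
    have "norm ((F + G) x) \<le> norm (F x) + norm (G x)" by (simp add: norm_triangle_ineq)
    also have "\<dots> \<le> (bnorm F + bnorm G) * norm x"
      using Bset_bound[OF assms(1) x(1)] Bset_bound[OF assms(2) x(1)] by (simp add: algebra_simps)
    finally show "y \<le> bnorm F + bnorm G" using x by (simp add: divide_le_eq)
  qed
  moreover have "norm ((F + G) 0) \<le> bnorm F + bnorm G"
    using bnorm_0[of F] bnorm_0[of G] norm_triangle_ineq[of "F 0" "G 0"] by simp
  ultimately show ?thesis unfolding bnorm_def[of "F + G"] by simp
qed

lemma bnorm_zero_eq:
  assumes "\<exists>x::'a::real_normed_vector. x \<noteq> 0"
  shows "bnorm (0 :: 'a \<Rightarrow> 'b::real_normed_vector) = 0"
proof -
  have "(\<lambda>x. norm ((0 :: 'a \<Rightarrow> 'b) x) / norm x) ` (- {0}) = {0}" using assms by auto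
  then show ?thesis unfolding bnorm_def by simp
qed

lemma bnorm_eq0:
  assumes "F \<in> Bset" "bnorm F = 0"
  shows "F = 0"
proof
  fix x show "F x = 0 x"
  proof (cases "x = 0")
    case True then show ?thesis using bnorm_0[of F] assms by simp
  next
    case False then show ?thesis using Bset_bound[OF assms(1) False] assms by simp
  qed
qed

lemma Bmetric:
  assumes "\<exists>x::'a::real_normed_vector. x \<noteq> 0"
  shows "Metric_space (Bset :: ('a \<Rightarrow> 'b::real_normed_vector) set) (\<lambda>F G. bnorm (F - G))"
proof
  fix F G :: "'a \<Rightarrow> 'b"
  show "0 \<le> bnorm (F - G)" by (rule bnorm_nonneg)
  have "F - G = - (G - F)" by simp
  moreover have "bnorm (- H) = bnorm H" for H :: "'a \<Rightarrow> 'b" unfolding bnorm_def by simp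
  ultimately show "bnorm (F - G) = bnorm (G - F)" by metis
next
  fix F G :: "'a \<Rightarrow> 'b" assume "F \<in> Bset" "G \<in> Bset"
  then show "(bnorm (F - G) = 0) = (F = G)"
    using bnorm_eq0[OF Bset_diff] bnorm_zero_eq[OF assms] by (metis right_minus_eq)
next
  fix F G H :: "'a \<Rightarrow> 'b" assume a: "F \<in> Bset" "G \<in> Bset" "H \<in> Bset"
  have "F - H = (F - G) + (G - H)" by simp
  then show "bnorm (F - H) \<le> bnorm (F - G) + bnorm (G - H)"
    using bnorm_add[OF Bset_diff[OF a(1,2)] Bset_diff[OF a(2,3)] assms] by simp
qed

lemma Bset_topo_bounded:
  fixes F :: "'a::real_normed_vector \<Rightarrow> 'b::real_normed_vector"
  assumes "F \<in> Bset"
  shows "topo_bounded F"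
  unfolding topo_bounded_def
proof (intro allI impI)
  fix S :: "'a set" assume "bounded S"
  then obtain a where a: "\<forall>x\<in>S. norm x \<le> a" by (auto simp: bounded_iff)
  have "norm (F x) \<le> bnorm F * \<bar>a\<bar> + norm (F 0)" if "x \<in> S" for x
  proof (cases "x = 0")
    case True then show ?thesis using bnorm_nonneg[of F] by simp
  next
    case False
    have "norm (F x) \<le> bnorm F * norm x" by (rule Bset_bound[OF assms False])
    also have "\<dots> \<le> bnorm F * \<bar>a\<bar>" using a that bnorm_nonneg[of F]
      by (intro mult_left_mono) auto
    finally show ?thesis using norm_ge_zero[of "F 0"] by linarith
  qed
  then show "bounded (F ` S)" by (intro boundedI) blast
qed

lemma contr_Bset:
  fixes F :: "'a::real_normed_vector \<Rightarrow> 'b::real_normed_vector"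
  assumes "M > 0" "topo_bounded F"
    and c: "\<And>r u. r \<noteq> 0 \<Longrightarrow> u \<noteq> 0 \<Longrightarrow> norm (F (r *\<^sub>R u)) \<le> M * \<bar>r\<bar> * norm (F u)"
  shows "F \<in> Bset"
proof -
  have "bounded (F ` sphere 0 1)"
    by (rule assms(2)[unfolded topo_bounded_def, rule_format]) (rule bounded_subset[OF bounded_cball sphere_cball])
  then obtain C where C: "\<forall>y\<in>F ` sphere 0 1. norm y \<le> C" by (auto simp: bounded_iff)
  have "norm (F x) / norm x \<le> M * C" if "x \<noteq> 0" for x
  proof -
    define u where "u = inverse (norm x) *\<^sub>R x"
    have u: "norm u = 1" "u \<noteq> 0" using that by (auto simp: u_def)
    have xu: "norm x *\<^sub>R u = x" using that by (simp add: u_def)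
    have "norm (F (norm x *\<^sub>R u)) \<le> M * \<bar>norm x\<bar> * norm (F u)"
      using c[of "norm x" u] u that by simp
    then have 1: "norm (F x) \<le> M * norm x * norm (F u)" by (simp only: xu abs_norm_cancel)
    have "norm (F u) \<le> C" using C u by auto
    then have "M * norm x * norm (F u) \<le> M * norm x * C" using assms(1)
      by (intro mult_left_mono) auto
    with 1 have "norm (F x) \<le> M * norm x * C" by linarith
    also have "M * norm x * C = (M * C) * norm x" by simp
    finally have "norm (F x) \<le> (M * C) * norm x" .
    then show ?thesis using that by (simp add: divide_le_eq)
  qed
  then show ?thesis unfolding Bset_def by (auto intro!: bdd_aboveI2)
qed

lemma closed_cond:
  fixes A Bp :: "'i \<Rightarrow> 'a::real_normed_vector" and C :: "'i \<Rightarrow> real"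
  assumes ne: "\<exists>x::'a. x \<noteq> 0"
    and I: "\<And>i. i \<in> I \<Longrightarrow> A i \<noteq> 0 \<and> Bp i \<noteq> 0 \<and> C i \<ge> 0"
  shows "closedin Btop {F \<in> (Bset :: ('a \<Rightarrow> 'b::real_normed_vector) set).
            \<forall>i\<in>I. norm (F (A i)) \<le> C i * norm (F (Bp i))}"
proof -
  interpret Bm: Metric_space "Bset :: ('a \<Rightarrow> 'b) set" "\<lambda>F G. bnorm (F - G)"
    by (rule Bmetric[OF ne])
  show ?thesis unfolding Btop_def Bm.closedin_metric
  proof (intro conjI allI impI)
    fix F :: "'a \<Rightarrow> 'b"
    assume F: "F \<in> Bset - {F \<in> Bset. \<forall>i\<in>I. norm (F (A i)) \<le> C i * norm (F (Bp i))}"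
    then obtain i where i: "i \<in> I" "norm (F (A i)) > C i * norm (F (Bp i))" and FB: "F \<in> Bset"
      by auto
    define g where "g = norm (F (A i)) - C i * norm (F (Bp i))"
    define D where "D = norm (A i) + C i * norm (Bp i) + 1"
    have g: "g > 0" using i by (simp add: g_def)
    have D: "D \<ge> 1" using I[OF i(1)] by (simp add: D_def)
    define r where "r = g / D"
    have r: "r > 0" using g D by (simp add: r_def)
    have "disjnt {F \<in> Bset. \<forall>i\<in>I. norm (F (A i)) \<le> C i * norm (F (Bp i))} (Bm.mball F r)"
    proof (unfold disjnt_iff, intro allI notI, elim conjE)
      fix G assume G: "G \<in> {F \<in> Bset. \<forall>i\<in>I. norm (F (A i)) \<le> C i * norm (F (Bp i))}"
        and "G \<in> Bm.mball F r"
      then have GB: "G \<in> Bset" and d: "bnorm (F - G) < r"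
        and Gi: "norm (G (A i)) \<le> C i * norm (G (Bp i))" using i by auto
      define e where "e = bnorm (F - G)"
      have e0: "e \<ge> 0" using bnorm_nonneg e_def by simp
      have h1: "norm (F (A i) - G (A i)) \<le> e * norm (A i)"
        using Bset_bound[OF Bset_diff[OF FB GB], of "A i"] I[OF i(1)] by (simp add: e_def)
      have h2: "norm (F (Bp i) - G (Bp i)) \<le> e * norm (Bp i)"
        using Bset_bound[OF Bset_diff[OF FB GB], of "Bp i"] I[OF i(1)] by (simp add: e_def)
      have a1: "norm (G (A i)) \<ge> norm (F (A i)) - e * norm (A i)"
        using h1 norm_triangle_ineq2[of "F (A i)" "G (A i)"] by linarith
      have a2: "norm (G (Bp i)) \<le> norm (F (Bp i)) + e * norm (Bp i)"
        using h2 norm_triangle_ineq2[of "G (Bp i)" "F (Bp i)"] norm_minus_commute[of "F (Bp i)" "G (Bp i)"]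
        by linarith
      have a3: "C i * norm (G (Bp i)) \<le> C i * norm (F (Bp i)) + C i * (e * norm (Bp i))"
        using mult_left_mono[OF a2, of "C i"] I[OF i(1)] by (simp add: algebra_simps)
      have "e * D < r * D" using d D by (simp add: e_def)
      also have "r * D = g" using D by (simp add: r_def)
      finally have "e * D < g" .
      then have "e * norm (A i) + C i * (e * norm (Bp i)) < g"
        using e0 unfolding D_def by (simp add: algebra_simps)
      then show False using a1 a3 Gi unfolding g_def by linarith
    qed
    then show "\<exists>r>0. disjnt {F \<in> Bset. \<forall>i\<in>I. norm (F (A i)) \<le> C i * norm (F (Bp i))}
        (Bm.mball F r)" using r by blast
  qed auto
qed

theorem theorem2:
  fixes M :: real
    and scX :: "complex \<Rightarrow> 'c::real_normed_vector \<Rightarrow> 'c"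
    and scY :: "complex \<Rightarrow> 'd::real_normed_vector \<Rightarrow> 'd"
  assumes "M > 0"
  shows "((\<exists>x::'a::real_normed_vector. x \<noteq> 0) \<longrightarrow> (\<exists>y::'b::real_normed_vector. y \<noteq> 0) \<longrightarrow>
            (BM_R M :: ('a \<Rightarrow> 'b) set) \<subseteq> Bset \<and> closedin Btop (BM_R M :: ('a \<Rightarrow> 'b) set))
       \<and> (complex_normed_scaling scX \<longrightarrow> complex_normed_scaling scY \<longrightarrow>
            (\<exists>x::'c. x \<noteq> 0) \<longrightarrow> (\<exists>y::'d. y \<noteq> 0) \<longrightarrow>
            (BM_C scX M :: ('c \<Rightarrow> 'd) set) \<subseteq> Bset \<and> closedin Btop (BM_C scX M :: ('c \<Rightarrow> 'd) set))"
proof (intro conjI impI)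
  assume ne: "\<exists>x::'a. x \<noteq> 0"
  have eq: "(BM_R M :: ('a \<Rightarrow> 'b) set) = {F \<in> Bset.
     \<forall>i\<in>{(k, x). k \<noteq> 0 \<and> x \<noteq> 0}. norm (F ((\<lambda>(k, x). k *\<^sub>R x) i)) \<le> (\<lambda>(k, x). M * \<bar>k\<bar>) i * norm (F ((\<lambda>(k, x). x) i))}"
  proof (intro set_eqI iffI)
    fix F :: "'a \<Rightarrow> 'b" assume "F \<in> BM_R M"
    then have "topo_bounded F" "contraction_R M F" by (auto simp: BM_R_def)
    moreover have "F \<in> Bset" using contr_Bset[OF assms] calculation
      unfolding contraction_R_def by blast
    ultimately show "F \<in> {F \<in> Bset. \<forall>i\<in>{(k, x). k \<noteq> 0 \<and> x \<noteq> 0}. norm (F ((\<lambda>(k, x). k *\<^sub>R x) i)) \<le> (\<lambda>(k, x). M * \<bar>k\<bar>) i * norm (F ((\<lambda>(k, x). x) i))}"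
      unfolding contraction_R_def by auto
  next
    fix F :: "'a \<Rightarrow> 'b"
    assume "F \<in> {F \<in> Bset. \<forall>i\<in>{(k, x). k \<noteq> 0 \<and> x \<noteq> 0}. norm (F ((\<lambda>(k, x). k *\<^sub>R x) i)) \<le> (\<lambda>(k, x). M * \<bar>k\<bar>) i * norm (F ((\<lambda>(k, x). x) i))}"
    then show "F \<in> BM_R M"
      unfolding BM_R_def contraction_R_def using Bset_topo_bounded by auto
  qed
  show "(BM_R M :: ('a \<Rightarrow> 'b) set) \<subseteq> Bset" unfolding eq by auto
  show "closedin Btop (BM_R M :: ('a \<Rightarrow> 'b) set)" unfolding eq
    by (rule closed_cond[OF ne]) (use assms in auto)
next
  assume sc: "complex_normed_scaling scX" and ne: "\<exists>x::'c. x \<noteq> 0"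
  have scn: "norm (scX a x) = cmod a * norm x" for a x using sc by (simp add: complex_normed_scaling_def)
  have scr: "scX (complex_of_real r) x = r *\<^sub>R x" for r x using sc by (simp add: complex_normed_scaling_def)
  have scnz: "scX a x \<noteq> 0" if "a \<noteq> 0" "x \<noteq> 0" for a x
    using scn[of a x] that by auto
  have eq: "(BM_C scX M :: ('c \<Rightarrow> 'd) set) = {F \<in> Bset.
     \<forall>i\<in>{(k, x). k \<noteq> 0 \<and> x \<noteq> 0}. norm (F ((\<lambda>(k, x). scX k x) i)) \<le> (\<lambda>(k, x). M * cmod k) i * norm (F ((\<lambda>(k, x). x) i))}"
  proof (intro set_eqI iffI)
    fix F :: "'c \<Rightarrow> 'd" assume "F \<in> BM_C scX M"
    then have tb: "topo_bounded F" and c: "contraction_C scX M F" by (auto simp: BM_C_def)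
    have "norm (F (r *\<^sub>R u)) \<le> M * \<bar>r\<bar> * norm (F u)" if "r \<noteq> 0" "u \<noteq> 0" for r u
      using c that scr[of r u] unfolding contraction_C_def
      by (metis norm_of_real of_real_eq_0_iff)
    then have "F \<in> Bset" using contr_Bset[OF assms tb] by blast
    with c show "F \<in> {F \<in> Bset. \<forall>i\<in>{(k, x). k \<noteq> 0 \<and> x \<noteq> 0}. norm (F ((\<lambda>(k, x). scX k x) i)) \<le> (\<lambda>(k, x). M * cmod k) i * norm (F ((\<lambda>(k, x). x) i))}"
      unfolding contraction_C_def by auto
  next
    fix F :: "'c \<Rightarrow> 'd"
    assume "F \<in> {F \<in> Bset. \<forall>i\<in>{(k, x). k \<noteq> 0 \<and> x \<noteq> 0}. norm (F ((\<lambda>(k, x). scX k x) i)) \<le> (\<lambda>(k, x). M * cmod k) i * norm (F ((\<lambda>(k, x). x) i))}"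
    then show "F \<in> BM_C scX M"
      unfolding BM_C_def contraction_C_def using Bset_topo_bounded by auto
  qed
  show "(BM_C scX M :: ('c \<Rightarrow> 'd) set) \<subseteq> Bset" unfolding eq by auto
  show "closedin Btop (BM_C scX M :: ('c \<Rightarrow> 'd) set)" unfolding eq
    by (rule closed_cond[OF ne]) (use assms scnz in auto)
qed

end
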